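(* Let $m\ge1$ be an integer, let $\delta>1$ be the positive root of $x^2-(m+1)x-1$, and let $\boldsymbol{\beta}=(\beta_1,\beta_2)$ with $\beta_1=\frac{\delta}{\delta-1}$ and $\beta_2=\delta-1$. Then every rational number in $[0,1)$ has a purely periodic $\boldsymbol{\beta}$-expansion; in particular $\gamma(\boldsymbol{\beta})=1$.
   Context: An alternate base $(\beta_1,\dots,\beta_p)$ ($\beta_i>1$) is identified with the purely periodic sequence $(\beta_k)_{k\ge1}$, $\beta_{k+p}=\beta_k$. For $x\in[0,1)$ the $\boldsymbol{\beta}$-expansion $d_{\boldsymbol{\beta}}(x)=a_1a_2\cdots$ is given by the greedy algorithm $r_0=x$, $a_{k+1}=\lfloor\beta_{k+1}r_k\rfloor$, $r_{k+1}=\beta_{k+1}r_k-a_{k+1}$. The base has Property (PP) if there is $\gamma>0$ such that $d_{\boldsymbol{\beta}}(x)$ is purely periodic for all rational $x\in[0,\gamma)$; $\gamma(\boldsymbol{\beta})$ denotes the supremum of all such $\gamma$ (with $\gamma\le1$). *)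

theory Defs
  imports Complex_Main
begin

text \<open>An alternate base is a sequence b :: nat \<Rightarrow> real, where b k is beta_k for k \<ge> 1
  (the value at index 0 is irrelevant); it is purely periodic with period p.\<close>

fun alt_rem :: "(nat \<Rightarrow> real) \<Rightarrow> real \<Rightarrow> nat \<Rightarrow> real" where
  "alt_rem b x 0 = x"
| "alt_rem b x (Suc k) = b (Suc k) * alt_rem b x k - of_int \<lfloor>b (Suc k) * alt_rem b x k\<rfloor>"

text \<open>Digits a_(k+1) = floor(beta_(k+1) r_k); a_k is meaningful for k \<ge> 1.\<close>

definition alt_digit :: "(nat \<Rightarrow> real) \<Rightarrow> real \<Rightarrow> nat \<Rightarrow> int" where
  "alt_digit b x k = \<lfloor>b k * alt_rem b x (k - 1)\<rfloor>"

definition purely_periodic_exp :: "(nat \<Rightarrow> real) \<Rightarrow> real \<Rightarrow> bool" where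
  "purely_periodic_exp b x \<longleftrightarrow>
     (\<exists>q\<ge>1. \<forall>k\<ge>1. alt_digit b x (k + q) = alt_digit b x k)"

definition alt_gamma :: "(nat \<Rightarrow> real) \<Rightarrow> real" where
  "alt_gamma b = Sup {g. 0 < g \<and> g \<le> 1 \<and>
       (\<forall>x\<in>\<rat>. 0 \<le> x \<and> x < g \<longrightarrow> purely_periodic_exp b x)}"

end

theory Submission
  imports Defs
begin

locale L =
  fixes m :: nat and d :: real
  assumes m1: "m \<ge> 1" and d1: "d > 1" and deq: "d^2 - (real m + 1) * d - 1 = 0"
begin

definition "b1 = d/(d-1)"
definition "e = -1/d"
definition "U = (d + real m)/(real m + 1)"
definition "A = -U/d - real m"

definition vl :: "int \<Rightarrow> int \<times> int \<Rightarrow> real" where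
  "vl q P = (of_int (fst P) + of_int (snd P) * d) / of_int q"
definition cvl :: "int \<Rightarrow> int \<times> int \<Rightarrow> real" where
  "cvl q P = (of_int (fst P) + of_int (snd P) * e) / of_int q"
definition dg1 :: "real \<Rightarrow> int" where "dg1 y = \<lfloor>b1 * y\<rfloor>"
definition dg2 :: "real \<Rightarrow> int" where "dg2 y = \<lfloor>(d-1) * (b1*y - dg1 y)\<rfloor>"
definition step :: "int \<Rightarrow> int \<times> int \<Rightarrow> int \<times> int" where
  "step q P = (snd P + q * dg1 (vl q P) - q * dg2 (vl q P),
               fst P + (int m + 1) * snd P - q * dg1 (vl q P))"
definition inv :: "int \<Rightarrow> int \<times> int \<Rightarrow> bool" where
  "inv q P \<longleftrightarrow> 0 \<le> vl q P \<and> vl q P < 1 \<and> A < cvl q P \<and> cvl q P < U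
     \<and> (vl q P \<ge> 1/d \<longrightarrow> cvl q P > A + 1)"

lemma dsq: "d^2 = (real m + 1) * d + 1" using deq by simp

lemma d_eq: "d = real m + 1 + 1/d"
proof -
  have "d * d = (real m + 1) * d + 1" using dsq by (simp add: power2_eq_square)
  then have "d * d / d = ((real m + 1) * d + 1) / d" by simp
  then show ?thesis using d1 by (simp add: add_divide_distrib)
qed

lemma d_bounds: "d > real m + 1" "d < real m + 2" "d > 2"
proof -
  have "1/d > 0" "1/d < 1" using d1 by auto
  then show "d > real m + 1" "d < real m + 2" using d_eq by linarith+
  then show "d > 2" using m1 by linarith
qed

lemma ed: "e * d = -1" using d1 unfolding e_def by simp

lemma esq: "e^2 = (real m + 1) * e + 1"
proof -
  have "d^2 * (e^2 - (real m + 1) * e - 1) = (e*d)^2 - (real m + 1)*(e*d)*d - d^2"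
    by (simp add: algebra_simps power2_eq_square)
  also have "... = 0" using dsq ed by (simp add: algebra_simps)
  finally show ?thesis using d1 by simp
qed

lemma b1d: "(d-1) * b1 = d" using d1 unfolding b1_def by simp

lemma U_id1: "U - A = d + 1"
proof -
  have mp: "real m + 1 > 0" by simp
  have "U * (1 + 1/d) = ((d + real m) * (d + 1)) / ((real m + 1) * d)"
    using d1 unfolding U_def by (simp add: field_simps)
  also have "(d + real m) * (d + 1) = (real m + 1) * (2*d + 1)"
    using dsq by (simp add: algebra_simps power2_eq_square)
  also have "((real m + 1) * (2*d + 1)) / ((real m + 1) * d) = (2*d+1)/d"
    using mp by simp
  also have "... = 2 + 1/d" using d1 by (simp add: field_simps)
  finally have "U * (1 + 1/d) = 2 + 1/d" .
  then show ?thesis unfolding A_def using d_eq by (simp add: algebra_simps)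
qed

lemma U_id2: "-A/d = U - 1"
proof -
  have mp: "real m + 1 > 0" by simp
  have "U * (1 - 1/d^2) = ((d + real m) * (d^2 - 1)) / ((real m + 1) * d^2)"
    using d1 unfolding U_def by (simp add: field_simps)
  also have "(d + real m) * (d^2 - 1) = (real m + 1) * (d * (d + real m))"
    using dsq by (simp add: algebra_simps)
  also have "((real m + 1) * (d * (d + real m))) / ((real m + 1) * d^2) = (d + real m)/d"
    using mp d1 by (simp add: power2_eq_square)
  also have "... = 1 + real m / d" using d1 by (simp add: field_simps)
  finally have h: "U * (1 - 1/d^2) = 1 + real m / d" .
  have "-A/d = U/d^2 + real m/d" unfolding A_def using d1 by (simp add: field_simps power2_eq_square)
  also have "... = U - 1" using h by (simp add: algebra_simps)
  finally show ?thesis .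
qed

lemma U_pos: "U > 1" using d_bounds unfolding U_def by (simp add: field_simps)

lemma step_vl:
  assumes "q > 0"
  shows "vl q (step q P) = d * vl q P - (d-1) * dg1 (vl q P) - dg2 (vl q P)"
proof -
  obtain S T where P: "P = (S,T)" by fastforce
  define a where "a = dg1 (vl q P)"
  define c where "c = dg2 (vl q P)"
  have qn: "real_of_int q \<noteq> 0" using assms by simp
  have "vl q (step q P) = (of_int (T + q*a - q*c) + of_int (S + (int m + 1)*T - q*a) * d) / of_int q"
    unfolding step_def vl_def P a_def c_def by simp
  also have "... = (of_int T + of_int S * d + of_int T * (real m + 1) * d) / of_int q - (d-1)*a - c"
    using qn by (simp add: field_simps)
  also have "of_int T + of_int S * d + of_int T * (real m + 1) * d = d * (of_int S + of_int T * d)"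
  proof -
    have "of_int T * d^2 = of_int T * ((real m+1)*d+1)" using dsq by simp
    then show ?thesis by (simp add: algebra_simps power2_eq_square)
  qed
  finally show ?thesis unfolding a_def c_def vl_def P by simp
qed

lemma step_vl2:
  assumes "q > 0"
  shows "vl q (step q P) = (d-1) * (b1 * vl q P - dg1 (vl q P))
     - \<lfloor>(d-1) * (b1 * vl q P - dg1 (vl q P))\<rfloor>"
proof -
  have "(d-1) * (b1 * vl q P - dg1 (vl q P)) = d * vl q P - (d-1) * dg1 (vl q P)"
  proof -
    have "(d-1) * (b1 * vl q P) = d * vl q P" using b1d by (metis mult.assoc)
    then show ?thesis by (simp add: algebra_simps)
  qed
  then show ?thesis using step_vl[OF assms] unfolding dg2_def by simp
qed

lemma step_cvl:
  assumes "q > 0"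
  shows "cvl q (step q P) = e * cvl q P + (1-e) * dg1 (vl q P) - dg2 (vl q P)"
proof -
  obtain S T where P: "P = (S,T)" by fastforce
  define a where "a = dg1 (vl q P)"
  define c where "c = dg2 (vl q P)"
  have qn: "real_of_int q \<noteq> 0" using assms by simp
  have "cvl q (step q P) = (of_int (T + q*a - q*c) + of_int (S + (int m + 1)*T - q*a) * e) / of_int q"
    unfolding step_def cvl_def P a_def c_def by simp
  also have "... = (of_int T + of_int S * e + of_int T * (real m + 1) * e) / of_int q + (1-e)*a - c"
    using qn by (simp add: field_simps)
  also have "of_int T + of_int S * e + of_int T * (real m + 1) * e = e * (of_int S + of_int T * e)"
  proof -
    have "of_int T * e^2 = of_int T * ((real m+1)*e+1)" using esq by simp
    then show ?thesis by (simp add: algebra_simps power2_eq_square)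
  qed
  finally show ?thesis unfolding a_def c_def cvl_def P by simp
qed

lemma b1_bounds: "b1 > 1" "b1 < 2" "b1 - 1 = 1/(d-1)"
  using d_bounds unfolding b1_def by (auto simp: field_simps)

lemma digits:
  assumes "0 \<le> y" "y < 1"
  shows "dg1 y = 0 \<or> dg1 y = 1"
    and "dg1 y = 1 \<Longrightarrow> y \<ge> 1/d"
    and "0 \<le> dg2 y" and "dg2 y \<le> int m"
    and "dg1 y = 1 \<Longrightarrow> dg2 y = 0"
    and "0 \<le> b1 * y - dg1 y" "b1 * y - dg1 y < 1"
proof -
  have "b1 * y < b1 * 1" by (rule mult_strict_left_mono) (use assms b1_bounds in auto)
  then have by1: "b1 * y < b1" by simp
  have b0: "0 \<le> b1 * y" using assms b1_bounds by simp
  have b2: "b1 * y < 2" using b1_bounds by1 by linarith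
  note b = b0 b2
  show d1c: "dg1 y = 0 \<or> dg1 y = 1" unfolding dg1_def using b by linarith
  show u0: "0 \<le> b1 * y - dg1 y" "b1 * y - dg1 y < 1" unfolding dg1_def by linarith+
  show "y \<ge> 1/d" if "dg1 y = 1"
  proof -
    have "b1 * y \<ge> 1" using that unfolding dg1_def by linarith
    then have "d * y \<ge> d - 1" using d_bounds unfolding b1_def by (simp add: field_simps)
    then have "y \<ge> 1 - 1/d" using d_bounds by (simp add: field_simps)
    moreover have "1 - 1/d \<ge> 1/d" using d_bounds by (simp add: field_simps)
    ultimately show ?thesis by linarith
  qed
  have dm: "d - 1 > 0" using d_bounds by simp
  show "0 \<le> dg2 y" unfolding dg2_def using u0 dm by simp
  have "(d-1) * (b1*y - dg1 y) < (d-1) * 1" using u0 dm by (intro mult_strict_left_mono) auto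
  then have "(d-1) * (b1*y - dg1 y) < d - 1" by simp
  then have "(d-1) * (b1*y - dg1 y) < real m + 1" using d_bounds by linarith
  then show "dg2 y \<le> int m" unfolding dg2_def by linarith
  show "dg2 y = 0" if "dg1 y = 1"
  proof -
    have "b1 * y - dg1 y < b1 - 1" using that by1 by simp
    then have "(d-1) * (b1*y - dg1 y) < (d-1) * (b1 - 1)" using dm by simp
    also have "(d-1)*(b1-1) = 1" using b1_bounds dm by simp
    finally have "(d-1) * (b1*y - dg1 y) < 1" .
    moreover have "0 \<le> (d-1) * (b1*y - dg1 y)" using u0 dm by simp
    ultimately show ?thesis unfolding dg2_def by (simp add: floor_eq_iff)
  qed
qed

lemma last_digit:
  assumes "0 \<le> y" "y < 1" "q > 0" "dg2 y = int m" "y = vl q P"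
  shows "vl q (step q P) < 1/d"
proof -
  note dd = digits[OF assms(1,2)]
  have dm: "d - 1 > 0" using d_bounds by simp
  have "(d-1) * (b1*y - dg1 y) < (d-1) * 1" using dd dm by (intro mult_strict_left_mono) auto
  then have "(d-1) * (b1*y - dg1 y) - int m < 1/d" using d_eq by simp
  then show ?thesis using step_vl2[OF assms(3), of P] assms(4,5) unfolding dg2_def by simp
qed

lemma e_neg: "e < 0" using d1 unfolding e_def by simp

lemma e_solve: "e * X = K \<Longrightarrow> X = - K * d"
proof -
  assume h: "e * X = K"
  have "X = - (e * d) * X" using ed by simp
  also have "... = - (e * X) * d" by (simp add: algebra_simps)
  finally show ?thesis using h by simp
qed

lemma inv_step:
  assumes q: "q > 0" and iv: "inv q P"
  shows "inv q (step q P)"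
proof -
  define y where "y = vl q P"
  define yc where "yc = cvl q P"
  define a where "a = dg1 y"
  define c where "c = dg2 y"
  have y01: "0 \<le> y" "y < 1" using iv unfolding inv_def y_def by auto
  have ycb: "A < yc" "yc < U" "y \<ge> 1/d \<Longrightarrow> yc > A + 1"
    using iv unfolding inv_def y_def yc_def by auto
  note dd = digits[OF y01]
  have dpos: "d > 0" using d1 by simp
  have y': "vl q (step q P) = (d-1) * (b1 * y - a) - \<lfloor>(d-1) * (b1 * y - a)\<rfloor>"
    using step_vl2[OF q, of P] unfolding y_def a_def by simp
  have yc': "cvl q (step q P) = - yc/d + (1 + 1/d) * a - c"
    using step_cvl[OF q, of P] unfolding yc_def a_def c_def y_def e_def by (simp add: algebra_simps)
  have c0: "0 \<le> c" "c \<le> int m" using dd unfolding c_def by auto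
  have a01: "a = 0 \<or> a = 1" using dd unfolding a_def by auto
  have ylt: "yc/d < U/d" using ycb dpos by (simp add: divide_strict_right_mono)
  have "(1 + 1/d) * a \<ge> 0" using a01 dpos by auto
  then have "- yc/d + (1 + 1/d) * a - c > - U/d - c" using ylt by linarith
  then have low: "cvl q (step q P) > - U/d - c" using yc' by simp
  have lowA: "cvl q (step q P) > A"
  proof -
    have "- U/d - c \<ge> A" unfolding A_def using c0 by simp
    then show ?thesis using low by linarith
  qed
  have lowA1: "cvl q (step q P) > A + 1" if "vl q (step q P) \<ge> 1/d"
  proof -
    have "c \<noteq> int m"
    proof
      assume "c = int m"
      then have "vl q (step q P) < 1/d" using last_digit[OF y01 q _ y_def] unfolding c_def by simp
      then show False using that by simp
    qed
    then have "c \<le> int m - 1" using c0 by simp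
    then have "- U/d - c \<ge> A + 1" unfolding A_def by simp
    then show ?thesis using low by linarith
  qed
  have up: "cvl q (step q P) < U"
  proof (cases "a = 0")
    case True
    have "-yc/d < -A/d" using ycb dpos by (simp add: divide_strict_right_mono)
    then show ?thesis using yc' True U_id2 c0 by simp
  next
    case False
    then have a1: "a = 1" using a01 by simp
    then have "y \<ge> 1/d" using dd unfolding a_def by simp
    then have "yc > A + 1" using ycb by simp
    then have h: "(A+1)/d < yc/d" using dpos by (simp add: divide_strict_right_mono)
    have "(A+1)/d = A/d + 1/d" by (simp add: add_divide_distrib)
    moreover have "-yc/d = -(yc/d)" "-A/d = -(A/d)" by simp_all
    ultimately have "-yc/d + (1 + 1/d) < -A/d + 1" using h by linarith
    then show ?thesis using yc' a1 U_id2 c0 by simp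
  qed
  have "0 \<le> vl q (step q P)" "vl q (step q P) < 1" using y' by linarith+
  then show ?thesis unfolding inv_def using lowA lowA1 up by auto
qed

lemma inj_aux1:
  assumes q: "q > 0" and iv: "inv q P" "inv q Q" and st: "step q P = step q Q"
    and aa: "dg1 (vl q P) = dg1 (vl q Q)" and cc: "dg2 (vl q P) > dg2 (vl q Q)"
  shows False
proof -
  define y where "y = vl q P"
  define z where "z = vl q Q"
  have e1: "d * y - (d-1) * dg1 y - dg2 y = d * z - (d-1) * dg1 z - dg2 z"
    using step_vl[OF q, of P] step_vl[OF q, of Q] st unfolding y_def z_def by simp
  have e2: "e * cvl q P + (1-e) * dg1 y - dg2 y = e * cvl q Q + (1-e) * dg1 z - dg2 z"
    using step_cvl[OF q, of P] step_cvl[OF q, of Q] st unfolding y_def z_def by simp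
  have k1: "real_of_int (dg2 y - dg2 z) \<ge> 1" using cc unfolding y_def z_def by simp
  have "d * (y - z) = dg2 y - dg2 z" using e1 aa unfolding y_def z_def by (simp add: algebra_simps)
  then have "d * (y - z) \<ge> 1" using k1 by simp
  then have "y - z \<ge> 1/d" using d1 by (simp add: field_simps)
  moreover have "z \<ge> 0" using iv unfolding inv_def z_def by simp
  ultimately have "y \<ge> 1/d" by linarith
  then have yc: "cvl q P > A + 1" using iv unfolding inv_def y_def by simp
  have "e * (cvl q P - cvl q Q) = dg2 y - dg2 z" using e2 aa unfolding y_def z_def by (simp add: algebra_simps)
  then have "cvl q P - cvl q Q = - real_of_int (dg2 y - dg2 z) * d" by (rule e_solve)
  moreover have "real_of_int (dg2 y - dg2 z) * d \<ge> 1 * d"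
    by (rule mult_right_mono) (use k1 d1 in auto)
  ultimately have "cvl q Q - cvl q P \<ge> d" by linarith
  then have "cvl q Q > A + 1 + d" using yc by linarith
  then show False using iv U_id1 unfolding inv_def by simp
qed

lemma inj_aux2:
  assumes q: "q > 0" and iv: "inv q P" "inv q Q" and st: "step q P = step q Q"
    and aa: "dg1 (vl q P) = 1" "dg1 (vl q Q) = 0"
  shows False
proof -
  define y where "y = vl q P"
  define z where "z = vl q Q"
  have y01: "0 \<le> y" "y < 1" using iv unfolding inv_def y_def by auto
  have z01: "0 \<le> z" "z < 1" using iv unfolding inv_def z_def by auto
  have c0: "dg2 y = 0" using digits(5)[OF y01] aa unfolding y_def by simp
  have c2: "dg2 z \<ge> 0" using digits(3)[OF z01] .
  have e2: "e * cvl q P + (1-e) * dg1 y - dg2 y = e * cvl q Q + (1-e) * dg1 z - dg2 z"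
    using step_cvl[OF q, of P] step_cvl[OF q, of Q] st unfolding y_def z_def by simp
  have "e * (cvl q P - cvl q Q) = e - 1 - dg2 z" using e2 aa c0 unfolding y_def z_def
    by (simp add: algebra_simps)
  then have "cvl q P - cvl q Q = - (e - 1 - dg2 z) * d" by (rule e_solve)
  also have "... = 1 + d + dg2 z * d" using ed by (simp add: algebra_simps)
  finally have "cvl q P - cvl q Q \<ge> 1 + d" using c2 d1 by simp
  then show False using iv U_id1 unfolding inv_def by simp
qed

lemma step_inj:
  assumes q: "q > 0" and iv: "inv q P" "inv q Q" and st: "step q P = step q Q"
  shows "P = Q"
proof -
  define y where "y = vl q P"
  define z where "z = vl q Q"
  have y01: "0 \<le> y" "y < 1" using iv unfolding inv_def y_def by auto
  have z01: "0 \<le> z" "z < 1" using iv unfolding inv_def z_def by auto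
  have aa: "dg1 y = dg1 z"
    using digits(1)[OF y01] digits(1)[OF z01] inj_aux2[OF q iv st] inj_aux2[OF q iv(2,1) st[symmetric]]
    unfolding y_def z_def by auto
  have cc: "dg2 y = dg2 z"
  proof (rule ccontr)
    assume "dg2 y \<noteq> dg2 z"
    then consider "dg2 y > dg2 z" | "dg2 y < dg2 z" by linarith
    then show False
    proof cases
      case 1 then show False using inj_aux1[OF q iv st] aa unfolding y_def z_def by simp
    next
      case 2 then show False using inj_aux1[OF q iv(2,1) st[symmetric]] aa unfolding y_def z_def by simp
    qed
  qed
  have e1: "d * y - (d-1) * dg1 y - dg2 y = d * z - (d-1) * dg1 z - dg2 z"
    using step_vl[OF q, of P] step_vl[OF q, of Q] st unfolding y_def z_def by simp
  have e2: "e * cvl q P + (1-e) * dg1 y - dg2 y = e * cvl q Q + (1-e) * dg1 z - dg2 z"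
    using step_cvl[OF q, of P] step_cvl[OF q, of Q] st unfolding y_def z_def by simp
  have "y = z" using e1 aa cc d1 by simp
  have "cvl q P = cvl q Q" using e2 aa cc e_neg by simp
  obtain S T where P: "P = (S,T)" by fastforce
  obtain S2 T2 where Q: "Q = (S2,T2)" by fastforce
  have qn: "real_of_int q \<noteq> 0" using q by simp
  have h1: "of_int S + of_int T * d = of_int S2 + of_int T2 * (d::real)"
    using \<open>y = z\<close> qn unfolding y_def z_def vl_def P Q by (simp add: divide_simps)
  have h2: "of_int S + of_int T * e = of_int S2 + of_int T2 * (e::real)"
    using \<open>cvl q P = cvl q Q\<close> qn unfolding cvl_def P Q by (simp add: divide_simps)
  have "(of_int T - of_int T2) * (d - e) = (0::real)" using h1 h2 by (simp add: algebra_simps)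
  moreover have "d - e \<noteq> 0" using e_neg d1 by simp
  ultimately have "T = T2" by simp
  then have "S = S2" using h1 by simp
  then show ?thesis using P Q \<open>T = T2\<close> by simp
qed

lemma inv_finite:
  assumes q: "q > 0"
  shows "finite {P. inv q P}"
proof -
  define K1 where "K1 = real_of_int q * (1 - A + U) / (d - e)"
  define N where "N = \<lceil>real_of_int q + K1 * d\<rceil>"
  have de: "d - e > 0" using e_neg d1 by simp
  have qr: "real_of_int q > 0" using q by simp
  have "{P. inv q P} \<subseteq> {-N..N} \<times> {-N..N}"
  proof
    fix P assume "P \<in> {P. inv q P}"
    then have iv: "inv q P" by simp
    obtain S T where P: "P = (S,T)" by fastforce
    have v: "0 \<le> vl q P" "vl q P < 1" "A < cvl q P" "cvl q P < U" using iv unfolding inv_def by auto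
    have qv: "real_of_int q * vl q P = of_int S + of_int T * d" using qr unfolding vl_def P by simp
    have qc: "real_of_int q * cvl q P = of_int S + of_int T * e" using qr unfolding cvl_def P by simp
    have tt: "of_int T * (d - e) = real_of_int q * (vl q P - cvl q P)"
      using qv qc by (simp add: algebra_simps)
    have "U/d > 0" using U_pos d1 by simp
    then have "A < 0" unfolding A_def by simp
    then have "\<bar>vl q P - cvl q P\<bar> \<le> 1 - A + U" using v U_pos by (simp add: abs_le_iff)
    then have "\<bar>real_of_int q * (vl q P - cvl q P)\<bar> \<le> real_of_int q * (1 - A + U)"
      using qr by (simp add: abs_mult)
    moreover have "\<bar>real_of_int T\<bar> * (d - e) = \<bar>real_of_int T * (d - e)\<bar>" using de by (simp add: abs_mult)
    ultimately have "\<bar>of_int T\<bar> * (d - e) \<le> real_of_int q * (1 - A + U)" using tt by simp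
    then have Tb: "\<bar>real_of_int T\<bar> \<le> K1" unfolding K1_def using de by (simp add: field_simps)
    have K1n: "K1 \<ge> 0" using Tb by linarith
    have "\<bar>real_of_int T\<bar> * d \<le> K1 * d" using Tb d1 by (simp add: mult_right_mono)
    have "\<bar>real_of_int T * d\<bar> \<le> K1 * d" using Tb d1 by (simp add: abs_mult mult_right_mono)
    moreover have "\<bar>real_of_int q * vl q P\<bar> \<le> real_of_int q" using v qr by (simp add: abs_mult)
    ultimately have Sb: "\<bar>real_of_int S\<bar> \<le> real_of_int q + K1 * d" using qv by linarith
    have "K1 \<le> K1 * d" using K1n d1 by (simp add: mult_le_cancel_left1)
    then have Tb2: "\<bar>real_of_int T\<bar> \<le> real_of_int q + K1 * d" using Tb qr by linarith
    have "\<bar>S\<bar> \<le> N" using Sb unfolding N_def by linarith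
    moreover have "\<bar>T\<bar> \<le> N" using Tb2 unfolding N_def by linarith
    ultimately show "P \<in> {-N..N} \<times> {-N..N}" unfolding P by auto
  qed
  then show ?thesis by (rule finite_subset) simp
qed

definition orb :: "int \<Rightarrow> int \<Rightarrow> nat \<Rightarrow> int \<times> int" where
  "orb q p k = (step q ^^ k) (p, 0)"

lemma orb_Suc: "orb q p (Suc k) = step q (orb q p k)" unfolding orb_def by simp

lemma inv_start:
  assumes q: "q > 0" and x: "0 \<le> (of_int p / of_int q :: real)" "of_int p / of_int q < (1::real)"
  shows "inv q (p, 0)"
proof -
  have v: "vl q (p,0) = of_int p / of_int q" "cvl q (p,0) = of_int p / of_int q"
    unfolding vl_def cvl_def by simp_all
  have Ub: "U/d > 0" using U_pos d1 by simp
  have "A + 1 < 0" unfolding A_def using m1 Ub by simp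
  then show ?thesis unfolding inv_def v using x U_pos by auto
qed

lemma orb_inv: "q > 0 \<Longrightarrow> inv q (p,0) \<Longrightarrow> inv q (orb q p k)"
  by (induction k) (auto simp: orb_Suc orb_def[of q p 0] inv_step)

lemma orb_descent:
  assumes q: "q > 0" and i0: "inv q (p,0)"
  shows "i < j \<Longrightarrow> orb q p i = orb q p j \<Longrightarrow> \<exists>n\<ge>1. orb q p n = orb q p 0"
proof (induction i arbitrary: j)
  case 0 then show ?case by (intro exI[of _ j]) auto
next
  case (Suc i)
  then obtain j' where j': "j = Suc j'" "i < j'" by (cases j) auto
  have "step q (orb q p i) = step q (orb q p j')" using Suc.prems j' by (simp add: orb_Suc)
  then have "orb q p i = orb q p j'" using step_inj[OF q orb_inv[OF q i0] orb_inv[OF q i0]] by blast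
  then show ?case using Suc.IH j' by blast
qed

lemma orb_period:
  assumes q: "q > 0" and i0: "inv q (p,0)"
  shows "\<exists>n\<ge>1. orb q p n = (p, 0)"
proof -
  have "range (orb q p) \<subseteq> {P. inv q P}" using orb_inv[OF q i0] by auto
  then have fin: "finite (range (orb q p))" using inv_finite[OF q] by (rule finite_subset)
  have "\<not> inj (orb q p)"
  proof
    assume "inj (orb q p)"
    then have "finite (UNIV :: nat set)" using fin finite_imageD by blast
    then show False by simp
  qed
  then obtain i j where ij: "i \<noteq> j" "orb q p i = orb q p j" unfolding inj_def by blast
  have "\<exists>n\<ge>1. orb q p n = orb q p 0"
  proof (cases "i < j")
    case True then show ?thesis using orb_descent[OF q i0] ij by blast
  next
    case False then have "j < i" using ij by simp
    then show ?thesis using orb_descent[OF q i0] ij by metis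
  qed
  then show ?thesis unfolding orb_def by simp
qed

lemma alt_rem_orb:
  assumes bo: "\<And>k. odd k \<Longrightarrow> b k = b1" and be: "\<And>k. even k \<Longrightarrow> b k = d - 1"
    and q: "q > 0"
  shows "alt_rem b (vl q (p,0)) (2*k) = vl q (orb q p k)"
proof (induction k)
  case 0 then show ?case unfolding orb_def by simp
next
  case (Suc k)
  have e2: "2 * Suc k = Suc (Suc (2*k))" by simp
  have "b (Suc (2*k)) = b1" by (rule bo) simp
  moreover have "b (Suc (Suc (2*k))) = d - 1" by (rule be) simp
  ultimately show ?case unfolding e2 using Suc.IH step_vl2[OF q, of "orb q p k"]
    by (simp add: orb_Suc dg1_def)
qed

lemma periodic:
  assumes bo: "\<And>k. odd k \<Longrightarrow> b k = b1" and be: "\<And>k. even k \<Longrightarrow> b k = d - 1"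
    and x: "x \<in> \<rat>" "0 \<le> x" "x < 1"
  shows "purely_periodic_exp b x"
proof -
  obtain p q where q: "q > 0" and xq: "x = of_int p / of_int q"
    using x(1) by (auto elim: Rats_cases')
  have i0: "inv q (p,0)" using inv_start[OF q] x xq by simp
  obtain n where n: "n \<ge> 1" "orb q p n = (p,0)" using orb_period[OF q i0] by blast
  have xv: "vl q (p,0) = x" unfolding vl_def xq by simp
  have r2n: "alt_rem b x (2*n) = x" using alt_rem_orb[OF bo be q, where p=p and k=n] n xv by simp
  have bper: "b (k + 2*n) = b k" for k
  proof (cases "odd k")
    case True then show ?thesis using bo[of k] bo[of "k+2*n"] by simp
  next
    case False then show ?thesis using be[of k] be[of "k+2*n"] by simp
  qed
  have rper: "alt_rem b x (k + 2*n) = alt_rem b x k" for k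
  proof (induction k)
    case 0 then show ?case using r2n by simp
  next
    case (Suc k)
    have "Suc k + 2*n = Suc (k + 2*n)" by simp
    then show ?case using Suc.IH bper[of "Suc k"] by simp
  qed
  show ?thesis unfolding purely_periodic_exp_def
  proof (intro exI[of _ "2*n"] conjI allI impI)
    show "1 \<le> 2*n" using n by simp
    fix k :: nat assume "1 \<le> k"
    then have "k + 2*n - 1 = (k - 1) + 2*n" by simp
    then show "alt_digit b x (k + 2*n) = alt_digit b x k"
      unfolding alt_digit_def using bper[of k] rper[of "k-1"] by simp
  qed
qed

end

theorem mainTheorem10:
  fixes m :: nat and \<delta> :: real and b :: "nat \<Rightarrow> real"
  assumes "m \<ge> 1"
    and "\<delta> > 1" and "\<delta>^2 - (real m + 1) * \<delta> - 1 = 0"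
    and "\<And>k. odd k \<Longrightarrow> b k = \<delta> / (\<delta> - 1)"
    and "\<And>k. even k \<Longrightarrow> b k = \<delta> - 1"
  shows "(\<forall>x\<in>\<rat>. 0 \<le> x \<and> x < 1 \<longrightarrow> purely_periodic_exp b x) \<and> alt_gamma b = 1"
proof -
  interpret L m \<delta> by unfold_locales (use assms in auto)
  have P: "\<forall>x\<in>\<rat>. 0 \<le> x \<and> x < 1 \<longrightarrow> purely_periodic_exp b x"
    using periodic[of b] assms(4,5) unfolding b1_def by blast
  define G where "G = {g. 0 < g \<and> g \<le> (1::real) \<and>
       (\<forall>x\<in>\<rat>. 0 \<le> x \<and> x < g \<longrightarrow> purely_periodic_exp b x)}"
  have "1 \<in> G" unfolding G_def using P by simp
  moreover have "\<forall>g\<in>G. g \<le> 1" unfolding G_def by simp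
  ultimately have "Sup G = 1" by (intro cSup_eq_maximum) auto
  then show ?thesis using P unfolding alt_gamma_def G_def by simp
qed

end
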